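(* Let $\alpha: I\to M$ be a unit-speed curve on an oriented surface $M\subset E^3$ with Darboux frame $\{T,V,U\}$ and curvatures $k_g,k_n,\tau_g$, and assume $(k_g(s),k_n(s))\neq(0,0)$ for all $s\in I$. Let $\gamma(s)=\alpha(s)+y_1(s)T(s)+y_2(s)V(s)+y_3(s)U(s)$, with $y_1,y_2,y_3$ smooth functions on $I$, be an associated curve of $\alpha$ whose tangent vector $\gamma'(s)$ is linearly dependent with $T(s)$, i.e. $\gamma'(s)=R(s)T(s)$ with $R(s)\neq 0$ for all $s$. Then the following are equivalent: (i) $\gamma$ is a general helix; (ii) $\alpha$ is a helical curve on $M$; (iii) $\alpha$ is a $D_n$-Darboux slant helix on $M$.
   Context: $M$ is an oriented surface in Euclidean 3-space $E^3$ and $\alpha:I\to M$ is a unit-speed curve with arc-length parameter $s$. Its Darboux frame $\{T,V,U\}$ consists of the unit tangent $T=\alpha'$, the unit surface normal $U$ of $M$ along $\alpha$, and $V=U\times T$; it satisfies $T'=k_gV+k_nU$, $V'=-k_gT+\tau_gU$, $U'=-k_nT-\tau_gV$, where $k_g,k_n,\tau_g$ are the geodesic curvature, normal curvature and geodesic torsion of $\alpha$. A regular curve in $E^3$ is a general helix if its unit tangent makes a constant angle with a fixed direction. $\alpha$ is a helical curve on $M$ if there are a fixed unit vector $d$ and a constant angle $\theta$ with $\langle T,d\rangle=\cos\theta$. The normal Darboux vector field of $\alpha$ is $D_n=-k_nV+k_gU$; $\alpha$ is a $D_n$-Darboux slant helix if the unit vector field $D_n/\|D_n\|$ makes a constant angle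 with a fixed unit direction. *)

theory Defs
  imports "HOL-Analysis.Analysis"
begin

definition smooth_real_on :: "real set \<Rightarrow> (real \<Rightarrow> real) \<Rightarrow> bool" where
  "smooth_real_on I f \<longleftrightarrow> (\<forall>n. \<forall>s\<in>I. ((deriv ^^ n) f) differentiable (at s))"

text \<open>Darboux frame data of a unit-speed curve alpha on an oriented surface:
  T = alpha', U the unit surface normal along alpha (orthogonal to T), V = U x T,
  and the Darboux frame equations with geodesic curvature kg, normal curvature kn
  and geodesic torsion tg.\<close>
definition darboux_frame ::
  "real set \<Rightarrow> (real \<Rightarrow> real^3) \<Rightarrow> (real \<Rightarrow> real^3) \<Rightarrow> (real \<Rightarrow> real^3) \<Rightarrow> (real \<Rightarrow> real^3)
   \<Rightarrow> (real \<Rightarrow> real) \<Rightarrow> (real \<Rightarrow> real) \<Rightarrow> (real \<Rightarrow> real) \<Rightarrow> bool" where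
  "darboux_frame I \<alpha> T V U kg kn tg \<longleftrightarrow>
     (\<forall>s\<in>I.
        (\<alpha> has_vector_derivative T s) (at s) \<and>
        norm (T s) = 1 \<and> norm (U s) = 1 \<and> T s \<bullet> U s = 0 \<and>
        V s = cross3 (U s) (T s) \<and>
        (T has_vector_derivative (kg s *\<^sub>R V s + kn s *\<^sub>R U s)) (at s) \<and>
        (V has_vector_derivative (- kg s *\<^sub>R T s + tg s *\<^sub>R U s)) (at s) \<and>
        (U has_vector_derivative (- kn s *\<^sub>R T s - tg s *\<^sub>R V s)) (at s))"

definition general_helix :: "real set \<Rightarrow> (real \<Rightarrow> real^3) \<Rightarrow> bool" where
  "general_helix I \<gamma> \<longleftrightarrow>
     (\<forall>s\<in>I. \<gamma> differentiable (at s) \<and> vector_derivative \<gamma> (at s) \<noteq> 0) \<and>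
     (\<exists>d \<theta>. norm d = 1 \<and>
        (\<forall>s\<in>I. ((1 / norm (vector_derivative \<gamma> (at s))) *\<^sub>R vector_derivative \<gamma> (at s)) \<bullet> d
                 = cos \<theta>))"

definition helical_curve :: "real set \<Rightarrow> (real \<Rightarrow> real^3) \<Rightarrow> bool" where
  "helical_curve I T \<longleftrightarrow> (\<exists>d \<theta>. norm d = 1 \<and> (\<forall>s\<in>I. T s \<bullet> d = cos \<theta>))"

definition normal_darboux :: "(real \<Rightarrow> real^3) \<Rightarrow> (real \<Rightarrow> real^3) \<Rightarrow> (real \<Rightarrow> real)
   \<Rightarrow> (real \<Rightarrow> real) \<Rightarrow> real \<Rightarrow> real^3" where
  "normal_darboux V U kg kn s = (- kn s) *\<^sub>R V s + kg s *\<^sub>R U s"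

definition Dn_darboux_slant_helix ::
  "real set \<Rightarrow> (real \<Rightarrow> real^3) \<Rightarrow> (real \<Rightarrow> real^3) \<Rightarrow> (real \<Rightarrow> real) \<Rightarrow> (real \<Rightarrow> real) \<Rightarrow> bool" where
  "Dn_darboux_slant_helix I V U kg kn \<longleftrightarrow>
     (\<exists>d \<theta>. norm d = 1 \<and>
        (\<forall>s\<in>I. ((1 / norm (normal_darboux V U kg kn s)) *\<^sub>R normal_darboux V U kg kn s) \<bullet> d
                 = cos \<theta>))"

end

theory Submission
  imports Defs
begin

lemma alg1: fixes k g n g' n' a b c t :: real
  assumes k: "k > 0" "k * k = g^2+n^2"
  shows "(((g'*b + (-g*a + t*c)*g) + (n'*c + (-n*a - t*b)*n)) * k - (g*b+n*c)*((g*g'+n*n')/k)) / (k*k)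
     = - k * a + ((g*n' - n*g')/(g^2+n^2) + t) * ((- n*b + g*c)/k)"
proof -
  have e: "g^2+n^2 = k*k" using k by simp
  have "(((g'*b + (-g*a + t*c)*g) + (n'*c + (-n*a - t*b)*n)) * k - (g*b+n*c)*((g*g'+n*n')/k)) / (k*k)
     = (((g'*b + (-g*a + t*c)*g) + (n'*c + (-n*a - t*b)*n))*(k*k) - (g*b+n*c)*(g*g'+n*n')) / k^3"
    using k(1) by (simp add: field_simps power3_eq_cube)
  also have "\<dots> = (- ((g^2+n^2)*(g^2+n^2)*a) + ((g*n' - n*g') + t*(g^2+n^2))*(-n*b+g*c)) / k^3"
    unfolding k(2) by (rule arg_cong[where f="\<lambda>x. x / k^3"]) (simp add: algebra_simps power2_eq_square)
  also have "\<dots> = - k * a + ((g*n' - n*g')/(g^2+n^2) + t) * ((- n*b + g*c)/k)"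
    unfolding e using k(1) by (simp add: field_simps power3_eq_cube)
  finally show ?thesis .
qed

lemma alg2: fixes k g n g' n' a b c t :: real
  assumes k: "k > 0" "k * k = g^2+n^2"
  shows "(((- n'*b + (-g*a + t*c)*(- n)) + (g'*c + (-n*a - t*b)*g)) * k - (- n*b+g*c)*((g*g'+n*n')/k)) / (k*k)
     = - ((g*n' - n*g')/(g^2+n^2) + t) * ((g*b + n*c)/k)"
proof -
  have e: "g^2+n^2 = k*k" using k by simp
  have "(((- n'*b + (-g*a + t*c)*(- n)) + (g'*c + (-n*a - t*b)*g)) * k - (- n*b+g*c)*((g*g'+n*n')/k)) / (k*k)
     = (((- n'*b + (-g*a + t*c)*(- n)) + (g'*c + (-n*a - t*b)*g))*(k*k) - (- n*b+g*c)*(g*g'+n*n')) / k^3"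
    using k(1) by (simp add: field_simps power3_eq_cube)
  also have "\<dots> = (- ((g*n' - n*g') + t*(g^2+n^2))*(g*b+n*c)) / k^3"
    unfolding k(2) by (rule arg_cong[where f="\<lambda>x. x / k^3"]) (simp add: algebra_simps power2_eq_square)
  also have "\<dots> = - ((g*n' - n*g')/(g^2+n^2) + t) * ((g*b + n*c)/k)"
    unfolding e using k(1) by (simp add: field_simps power3_eq_cube)
  finally show ?thesis .
qed

lemma alg0: fixes q a b c d :: real
  shows "inverse q / 2 * (2*(a*b) + 2*(c*d)) = (b*a + d*c)/q"
proof -
  have "inverse q / 2 * (2*(a*b) + 2*(c*d)) = inverse q * (a*b + c*d)" by simp
  also have "\<dots> = (b*a + d*c)/q" by (simp add: divide_inverse mult.commute)
  finally show ?thesis .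
qed
lemma key:
  fixes A B C kg kn tg :: "real \<Rightarrow> real"
  assumes dA: "(A has_real_derivative kg s * B s + kn s * C s) (at s)"
   and dB: "(B has_real_derivative - kg s * A s + tg s * C s) (at s)"
   and dC: "(C has_real_derivative - kn s * A s - tg s * B s) (at s)"
   and dg: "(kg has_real_derivative kg') (at s)" and dn: "(kn has_real_derivative kn') (at s)"
   and pos: "kg s^2 + kn s^2 > 0"
  shows "((\<lambda>s. (kg s * B s + kn s * C s) / sqrt (kg s^2 + kn s^2)) has_real_derivative
      (- sqrt (kg s^2 + kn s^2) * A s + ((kg s * kn' - kn s * kg')/(kg s^2+kn s^2) + tg s) *
        ((- kn s * B s + kg s * C s) / sqrt (kg s^2 + kn s^2)))) (at s)"
   "((\<lambda>s. (- kn s * B s + kg s * C s) / sqrt (kg s^2 + kn s^2)) has_real_derivative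
      (- ((kg s * kn' - kn s * kg')/(kg s^2+kn s^2) + tg s) *
        ((kg s * B s + kn s * C s) / sqrt (kg s^2 + kn s^2)))) (at s)"
proof -
  define k where "k = sqrt (kg s^2 + kn s^2)"
  have kpos: "k > 0" unfolding k_def using pos by (rule real_sqrt_gt_zero)
  have k2: "k * k = kg s^2 + kn s^2" unfolding k_def real_sqrt_mult_self by (rule abs_of_pos[OF pos])
  have knz: "sqrt (kg s^2 + kn s^2) \<noteq> 0" using less_imp_neq[OF kpos[unfolded k_def]] by (rule not_sym)
  have dk: "((\<lambda>s. sqrt (kg s^2 + kn s^2)) has_real_derivative (kg s * kg' + kn s * kn') / k) (at s)"
  proof -
    have d2: "((\<lambda>s. kg s^2 + kn s^2) has_real_derivative (2*(kg' * kg s) + 2*(kn' * kn s))) (at s)"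
      using DERIV_add[OF DERIV_power[OF dg, of 2] DERIV_power[OF dn, of 2]] by simp
    have "((\<lambda>s. sqrt (kg s^2 + kn s^2)) has_real_derivative
       (inverse (sqrt (kg s^2 + kn s^2)) / 2) * (2*(kg' * kg s) + 2*(kn' * kn s))) (at s)"
      using DERIV_chain2[OF DERIV_real_sqrt[OF pos] d2] .
    then show ?thesis unfolding k_def by (rule DERIV_cong) (rule alg0)
  qed
  have D1: "((\<lambda>s. (kg s * B s + kn s * C s) / sqrt (kg s^2 + kn s^2)) has_real_derivative
     (((kg' * B s + (- kg s * A s + tg s * C s) * kg s) + (kn' * C s + (- kn s * A s - tg s * B s) * kn s))
        * sqrt (kg s^2 + kn s^2) - (kg s * B s + kn s * C s) * ((kg s * kg' + kn s * kn') / k))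
      / (sqrt (kg s^2 + kn s^2) * sqrt (kg s^2 + kn s^2))) (at s)"
    by (rule DERIV_divide[OF DERIV_add[OF DERIV_mult[OF dg dB] DERIV_mult[OF dn dC]] dk knz])
  have E1: "(((kg' * B s + (- kg s * A s + tg s * C s) * kg s) + (kn' * C s + (- kn s * A s - tg s * B s) * kn s))
        * k - (kg s * B s + kn s * C s) * ((kg s * kg' + kn s * kn') / k)) / (k * k)
     = - k * A s + ((kg s * kn' - kn s * kg')/(kg s^2+kn s^2) + tg s) * ((- kn s * B s + kg s * C s) / k)"
    by (rule alg1[OF kpos k2])
  show "((\<lambda>s. (kg s * B s + kn s * C s) / sqrt (kg s^2 + kn s^2)) has_real_derivative
      (- sqrt (kg s^2 + kn s^2) * A s + ((kg s * kn' - kn s * kg')/(kg s^2+kn s^2) + tg s) *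
        ((- kn s * B s + kg s * C s) / sqrt (kg s^2 + kn s^2)))) (at s)"
    by (rule DERIV_cong[OF D1[unfolded k_def] E1[unfolded k_def]])
  have D2: "((\<lambda>s. (- kn s * B s + kg s * C s) / sqrt (kg s^2 + kn s^2)) has_real_derivative
     (((- kn' * B s + (- kg s * A s + tg s * C s) * (- kn s)) + (kg' * C s + (- kn s * A s - tg s * B s) * kg s))
        * sqrt (kg s^2 + kn s^2) - (- kn s * B s + kg s * C s) * ((kg s * kg' + kn s * kn') / k))
      / (sqrt (kg s^2 + kn s^2) * sqrt (kg s^2 + kn s^2))) (at s)"
    by (rule DERIV_divide[OF DERIV_add[OF DERIV_mult[OF DERIV_minus[OF dn] dB] DERIV_mult[OF dg dC]] dk knz])
  have E2: "(((- kn' * B s + (- kg s * A s + tg s * C s) * (- kn s)) + (kg' * C s + (- kn s * A s - tg s * B s) * kg s))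
        * k - (- kn s * B s + kg s * C s) * ((kg s * kg' + kn s * kn') / k)) / (k * k)
     = - ((kg s * kn' - kn s * kg')/(kg s^2+kn s^2) + tg s) * ((kg s * B s + kn s * C s) / k)"
    by (rule alg2[OF kpos k2])
  show "((\<lambda>s. (- kn s * B s + kg s * C s) / sqrt (kg s^2 + kn s^2)) has_real_derivative
      (- ((kg s * kn' - kn s * kg')/(kg s^2+kn s^2) + tg s) *
        ((kg s * B s + kn s * C s) / sqrt (kg s^2 + kn s^2)))) (at s)"
    by (rule DERIV_cong[OF D2[unfolded k_def] E2[unfolded k_def]])
qed
lemma vd_inner:
  assumes "(f has_vector_derivative f') (at s)"
  shows "((\<lambda>s. f s \<bullet> d) has_real_derivative (f' \<bullet> d)) (at s)"
proof -
  have "((\<lambda>s. f s \<bullet> d) has_derivative (\<lambda>h. (h *\<^sub>R f') \<bullet> d)) (at s)"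
    using bounded_linear.has_derivative[OF bounded_linear_inner_left[of d] assms[unfolded has_vector_derivative_def]] .
  moreover have "(\<lambda>h. (h *\<^sub>R f') \<bullet> d) = (*) (f' \<bullet> d)" by (auto simp: fun_eq_iff)
  ultimately show ?thesis unfolding has_field_derivative_def by simp
qed

lemma local_zero_deriv:
  fixes f :: "real \<Rightarrow> real"
  assumes "open S" "s \<in> S" "\<forall>y\<in>S. f y = c" "(f has_real_derivative l) (at s)"
  shows "l = 0"
proof -
  obtain e where e: "e > 0" "ball s e \<subseteq> S" using assms(1,2) open_contains_ball by blast
  have "\<forall>y. \<bar>s - y\<bar> < e \<longrightarrow> f s = f y"
    using e assms(2,3) by (auto simp: dist_real_def subset_iff)
  then show ?thesis using DERIV_local_const[OF assms(4) e(1)] by blast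
qed

lemma zero_deriv_const:
  fixes f :: "real \<Rightarrow> real"
  assumes "is_interval S" "\<And>s. s \<in> S \<Longrightarrow> (f has_real_derivative 0) (at s)"
  shows "\<exists>c. \<forall>x\<in>S. f x = c"
  using has_field_derivative_zero_constant[OF is_interval_convex[OF assms(1)]]
    assms(2) has_field_derivative_at_within by blast

lemma smooth_deriv: "smooth_real_on I f \<Longrightarrow> s \<in> I \<Longrightarrow> (f has_real_derivative deriv f s) (at s)"
  unfolding smooth_real_on_def by (metis DERIV_deriv_iff_real_differentiable funpow_0)

lemma smooth_cont: "smooth_real_on I f \<Longrightarrow> continuous_on I f"
  unfolding smooth_real_on_def
  by (metis continuous_at_imp_continuous_on differentiable_imp_continuous_within funpow_0)

lemma smooth_deriv_cont: "smooth_real_on I f \<Longrightarrow> continuous_on I (deriv f)"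
  unfolding smooth_real_on_def
  by (metis continuous_at_imp_continuous_on differentiable_imp_continuous_within funpow_0 funpow_Suc_right o_apply)

theorem theorem3p1:
  fixes I :: "real set"
    and \<alpha> T V U \<gamma> :: "real \<Rightarrow> real^3"
    and kg kn tg y1 y2 y3 R :: "real \<Rightarrow> real"
  assumes I: "is_interval I" "open I" "I \<noteq> {}"
    and frame: "darboux_frame I \<alpha> T V U kg kn tg"
    and curv_smooth: "smooth_real_on I kg" "smooth_real_on I kn" "smooth_real_on I tg"
    and nonzero: "\<forall>s\<in>I. (kg s, kn s) \<noteq> (0, 0)"
    and y_smooth: "smooth_real_on I y1" "smooth_real_on I y2" "smooth_real_on I y3"
    and gamma_def: "\<forall>s. \<gamma> s = \<alpha> s + y1 s *\<^sub>R T s + y2 s *\<^sub>R V s + y3 s *\<^sub>R U s"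
    and gamma_deriv: "\<forall>s\<in>I. (\<gamma> has_vector_derivative R s *\<^sub>R T s) (at s) \<and> R s \<noteq> 0"
  shows "(general_helix I \<gamma> \<longleftrightarrow> helical_curve I T) \<and>
         (helical_curve I T \<longleftrightarrow> Dn_darboux_slant_helix I V U kg kn)"
proof -
  have dal: "\<And>s. s \<in> I \<Longrightarrow> (\<alpha> has_vector_derivative T s) (at s)"
    and nT: "\<And>s. s \<in> I \<Longrightarrow> norm (T s) = 1"
    and nU: "\<And>s. s \<in> I \<Longrightarrow> norm (U s) = 1"
    and TU: "\<And>s. s \<in> I \<Longrightarrow> T s \<bullet> U s = 0"
    and Vd: "\<And>s. s \<in> I \<Longrightarrow> V s = cross3 (U s) (T s)"
    and dT: "\<And>s. s \<in> I \<Longrightarrow> (T has_vector_derivative (kg s *\<^sub>R V s + kn s *\<^sub>R U s)) (at s)"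
    and dV: "\<And>s. s \<in> I \<Longrightarrow> (V has_vector_derivative (- kg s *\<^sub>R T s + tg s *\<^sub>R U s)) (at s)"
    and dU: "\<And>s. s \<in> I \<Longrightarrow> (U has_vector_derivative (- kn s *\<^sub>R T s - tg s *\<^sub>R V s)) (at s)"
    using frame unfolding darboux_frame_def by blast+
  have TV: "\<And>s. s \<in> I \<Longrightarrow> T s \<bullet> V s = 0" using Vd dot_cross_self(2) by simp
  have UV: "\<And>s. s \<in> I \<Longrightarrow> U s \<bullet> V s = 0" using Vd dot_cross_self(1) by simp
  have nV: "norm (V s) = 1" if "s \<in> I" for s
  proof -
    have "(norm (V s))\<^sup>2 + (U s \<bullet> T s)\<^sup>2 = (norm (U s) * norm (T s))\<^sup>2"
      using norm_cross_dot[of "U s" "T s"] Vd[OF that] by simp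
    then have "(norm (V s))\<^sup>2 = 1" using nU[OF that] nT[OF that] TU[OF that] by (simp add: inner_commute)
    then show ?thesis using norm_ge_zero[of "V s"] by (auto simp: power2_eq_1_iff)
  qed
  have TT: "\<And>s. s \<in> I \<Longrightarrow> T s \<bullet> T s = 1" using nT norm_eq_1 by blast
  have UU: "\<And>s. s \<in> I \<Longrightarrow> U s \<bullet> U s = 1" using nU norm_eq_1 by blast
  have VV: "\<And>s. s \<in> I \<Longrightarrow> V s \<bullet> V s = 1" using nV norm_eq_1 by blast
  have conI: "connected I" using I(1) is_interval_connected by blast
  obtain s0 where s0: "s0 \<in> I" using I(3) by blast
  have contT: "continuous_on I T"
    by (rule continuous_at_imp_continuous_on) (use dT has_vector_derivative_continuous in blast)
  have contV: "continuous_on I V"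
    by (rule continuous_at_imp_continuous_on) (use dV has_vector_derivative_continuous in blast)
  have contU: "continuous_on I U"
    by (rule continuous_at_imp_continuous_on) (use dU has_vector_derivative_continuous in blast)
  note cs = smooth_cont[OF curv_smooth(1)] smooth_cont[OF curv_smooth(2)] smooth_cont[OF curv_smooth(3)]
    smooth_cont[OF y_smooth(1)] smooth_cont[OF y_smooth(2)] smooth_cont[OF y_smooth(3)]
    smooth_deriv_cont[OF curv_smooth(1)] smooth_deriv_cont[OF curv_smooth(2)]
    smooth_deriv_cont[OF y_smooth(1)]

  have VT: "\<And>s. s \<in> I \<Longrightarrow> V s \<bullet> T s = 0" using TV by (simp add: inner_commute)
  have UT: "\<And>s. s \<in> I \<Longrightarrow> U s \<bullet> T s = 0" using TU by (simp add: inner_commute)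
  have VU: "\<And>s. s \<in> I \<Longrightarrow> V s \<bullet> U s = 0" using UV by (simp add: inner_commute)
  have part1: "general_helix I \<gamma> \<longleftrightarrow> helical_curve I T"
  proof -
    have geq: "\<gamma> = (\<lambda>s. \<alpha> s + y1 s *\<^sub>R T s + y2 s *\<^sub>R V s + y3 s *\<^sub>R U s)" using gamma_def by auto
    have Gd: "(\<gamma> has_vector_derivative (T s + (y1 s *\<^sub>R (kg s *\<^sub>R V s + kn s *\<^sub>R U s) + deriv y1 s *\<^sub>R T s)
       + (y2 s *\<^sub>R (- kg s *\<^sub>R T s + tg s *\<^sub>R U s) + deriv y2 s *\<^sub>R V s)
       + (y3 s *\<^sub>R (- kn s *\<^sub>R T s - tg s *\<^sub>R V s) + deriv y3 s *\<^sub>R U s))) (at s)" if "s \<in> I" for s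
      unfolding geq
      by (intro has_vector_derivative_add has_vector_derivative_scaleR dal dT dV dU
          smooth_deriv[OF y_smooth(1)] smooth_deriv[OF y_smooth(2)] smooth_deriv[OF y_smooth(3)] that)
    have Rf: "R s = 1 + deriv y1 s - y2 s * kg s - y3 s * kn s" if "s \<in> I" for s
    proof -
      have "R s *\<^sub>R T s = (T s + (y1 s *\<^sub>R (kg s *\<^sub>R V s + kn s *\<^sub>R U s) + deriv y1 s *\<^sub>R T s)
       + (y2 s *\<^sub>R (- kg s *\<^sub>R T s + tg s *\<^sub>R U s) + deriv y2 s *\<^sub>R V s)
       + (y3 s *\<^sub>R (- kn s *\<^sub>R T s - tg s *\<^sub>R V s) + deriv y3 s *\<^sub>R U s))"
        using vector_derivative_unique_at gamma_deriv Gd that by blast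
      then have "(R s *\<^sub>R T s) \<bullet> T s = (T s + (y1 s *\<^sub>R (kg s *\<^sub>R V s + kn s *\<^sub>R U s) + deriv y1 s *\<^sub>R T s)
       + (y2 s *\<^sub>R (- kg s *\<^sub>R T s + tg s *\<^sub>R U s) + deriv y2 s *\<^sub>R V s)
       + (y3 s *\<^sub>R (- kn s *\<^sub>R T s - tg s *\<^sub>R V s) + deriv y3 s *\<^sub>R U s)) \<bullet> T s" by simp
      then show ?thesis using TT[OF that] VT[OF that] UT[OF that]
        by (simp add: inner_add_left inner_diff_left algebra_simps)
    qed
    have Rc: "continuous_on I R"
    proof (rule continuous_on_eq)
      show "continuous_on I (\<lambda>s. 1 + deriv y1 s - y2 s * kg s - y3 s * kn s)"
        by (intro continuous_intros cs)
    qed (use Rf in auto)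
    define e where "e s = R s / \<bar>R s\<bar>" for s
    have ec: "continuous_on I e" unfolding e_def
      by (intro continuous_intros Rc) (use gamma_deriv in auto)
    have "e ` I \<subseteq> {1, -1}"
    proof
      fix x assume "x \<in> e ` I"
      then obtain s where s: "s \<in> I" "x = e s" by auto
      have "R s \<noteq> 0" using gamma_deriv s(1) by blast
      then show "x \<in> {1, -1}" using s(2) by (cases "R s > 0") (auto simp: e_def)
    qed
    then have "finite (e ` I)" by (rule finite_subset) simp
    then have "e constant_on I" using continuous_finite_range_constant[OF conI ec] by blast
    then obtain \<epsilon> where eps: "\<And>s. s \<in> I \<Longrightarrow> e s = \<epsilon>" unfolding constant_on_def by blast
    have eps1: "\<epsilon> = 1 \<or> \<epsilon> = -1" using eps[OF s0] gamma_deriv s0 by (auto simp: e_def abs_if)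
    have vd: "vector_derivative \<gamma> (at s) = R s *\<^sub>R T s" if "s \<in> I" for s
      using gamma_deriv that vector_derivative_at by blast
    have unit: "(1 / norm (vector_derivative \<gamma> (at s))) *\<^sub>R vector_derivative \<gamma> (at s) = \<epsilon> *\<^sub>R T s"
      if "s \<in> I" for s
    proof -
      have "(1 / norm (vector_derivative \<gamma> (at s))) *\<^sub>R vector_derivative \<gamma> (at s)
          = (1 / \<bar>R s\<bar>) *\<^sub>R (R s *\<^sub>R T s)" using vd[OF that] nT[OF that] by simp
      also have "\<dots> = e s *\<^sub>R T s" by (simp add: e_def)
      finally show ?thesis using eps[OF that] by simp
    qed
    have reg: "\<forall>s\<in>I. \<gamma> differentiable (at s) \<and> vector_derivative \<gamma> (at s) \<noteq> 0"
    proof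
      fix s assume s: "s \<in> I"
      have "T s \<noteq> 0" using nT[OF s] by auto
      then show "\<gamma> differentiable (at s) \<and> vector_derivative \<gamma> (at s) \<noteq> 0"
        using gamma_deriv s vd[OF s] differentiableI_vector by auto
    qed
    have ee: "\<epsilon> * \<epsilon> = 1" "norm (\<epsilon> *\<^sub>R d) = norm d" for d :: "real^3" using eps1 by auto
    show ?thesis
    proof
      assume "general_helix I \<gamma>"
      then obtain d \<theta> where d: "norm d = 1" "\<forall>s\<in>I. \<epsilon> *\<^sub>R T s \<bullet> d = cos \<theta>"
        unfolding general_helix_def using unit by auto
      show "helical_curve I T" unfolding helical_curve_def
        by (rule exI[of _ "\<epsilon> *\<^sub>R d"], rule exI[of _ \<theta>]) (use d ee in auto)
    next
      assume "helical_curve I T"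
      then obtain d \<theta> where d: "norm d = 1" "\<forall>s\<in>I. T s \<bullet> d = cos \<theta>"
        unfolding helical_curve_def by auto
      have "\<forall>s\<in>I. (1 / norm (vector_derivative \<gamma> (at s))) *\<^sub>R vector_derivative \<gamma> (at s) \<bullet> (\<epsilon> *\<^sub>R d) = cos \<theta>"
        using d ee unit by (simp add: mult.assoc[symmetric])
      then show "general_helix I \<gamma>" unfolding general_helix_def using reg d ee
        by (intro conjI reg exI[of _ "\<epsilon> *\<^sub>R d"] exI[of _ \<theta>]) auto
    qed
  qed

  have part2: "helical_curve I T \<longleftrightarrow> Dn_darboux_slant_helix I V U kg kn"
  proof -
    define k where "k s = sqrt (kg s^2 + kn s^2)" for s
    have kp: "kg s^2 + kn s^2 > 0" if "s \<in> I" for s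
      using nonzero that sum_power2_gt_zero_iff by auto
    have kpos: "k s > 0" if "s \<in> I" for s unfolding k_def using kp[OF that] by (rule real_sqrt_gt_zero)
    define sg where "sg s = (kg s * deriv kn s - kn s * deriv kg s)/(kg s^2+kn s^2) + tg s" for s
    define G where "G d s = (kg s * (V s \<bullet> d) + kn s * (U s \<bullet> d)) / k s" for d s
    define F where "F d s = (- kn s * (V s \<bullet> d) + kg s * (U s \<bullet> d)) / k s" for d s
    have dA: "((\<lambda>s. T s \<bullet> d) has_real_derivative k s * G d s) (at s)" if "s \<in> I" for d s
    proof -
      have "((\<lambda>s. T s \<bullet> d) has_real_derivative (kg s *\<^sub>R V s + kn s *\<^sub>R U s) \<bullet> d) (at s)"
        by (rule vd_inner[OF dT[OF that]])
      moreover have "(kg s *\<^sub>R V s + kn s *\<^sub>R U s) \<bullet> d = k s * G d s"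
        using kpos[OF that] by (simp add: G_def inner_add_left)
      ultimately show ?thesis by simp
    qed
    have dA': "((\<lambda>s. T s \<bullet> d) has_real_derivative kg s * (V s \<bullet> d) + kn s * (U s \<bullet> d)) (at s)" if "s \<in> I" for d s
      using vd_inner[OF dT[OF that], of d] by (simp add: inner_add_left)
    have dB: "((\<lambda>s. V s \<bullet> d) has_real_derivative - kg s * (T s \<bullet> d) + tg s * (U s \<bullet> d)) (at s)" if "s \<in> I" for d s
      using vd_inner[OF dV[OF that], of d] by (simp add: inner_add_left inner_diff_left)
    have dC: "((\<lambda>s. U s \<bullet> d) has_real_derivative - kn s * (T s \<bullet> d) - tg s * (V s \<bullet> d)) (at s)" if "s \<in> I" for d s
      using vd_inner[OF dU[OF that], of d] by (simp add: inner_diff_left)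
    have Geq: "G d = (\<lambda>s. (kg s * (V s \<bullet> d) + kn s * (U s \<bullet> d)) / sqrt (kg s^2 + kn s^2))" for d
      by (auto simp: G_def k_def fun_eq_iff)
    have Feq: "F d = (\<lambda>s. (- kn s * (V s \<bullet> d) + kg s * (U s \<bullet> d)) / sqrt (kg s^2 + kn s^2))" for d
      by (auto simp: F_def k_def fun_eq_iff)
    have dG: "(G d has_real_derivative (- k s * (T s \<bullet> d) + sg s * F d s)) (at s)" if "s \<in> I" for d s
      using key(1)[where A="\<lambda>s. T s \<bullet> d" and B="\<lambda>s. V s \<bullet> d" and C="\<lambda>s. U s \<bullet> d"
          and kg=kg and kn=kn and tg=tg and s=s,
          OF dA'[OF that, of d] dB[OF that, of d] dC[OF that, of d] smooth_deriv[OF curv_smooth(1) that]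
          smooth_deriv[OF curv_smooth(2) that] kp[OF that]]
      unfolding Geq by (simp add: k_def sg_def F_def)
    have dF: "(F d has_real_derivative (- sg s * G d s)) (at s)" if "s \<in> I" for d s
      using key(2)[where A="\<lambda>s. T s \<bullet> d" and B="\<lambda>s. V s \<bullet> d" and C="\<lambda>s. U s \<bullet> d"
          and kg=kg and kn=kn and tg=tg and s=s,
          OF dA'[OF that, of d] dB[OF that, of d] dC[OF that, of d] smooth_deriv[OF curv_smooth(1) that]
          smooth_deriv[OF curv_smooth(2) that] kp[OF that]]
      unfolding Feq by (simp add: k_def sg_def G_def)
    have kc: "continuous_on I k" unfolding k_def by (intro continuous_intros cs)
    have sgc: "continuous_on I sg" unfolding sg_def
      by (intro continuous_intros cs) (use kp in force)
    define u where "u s = (1 / norm (normal_darboux V U kg kn s)) *\<^sub>R normal_darboux V U kg kn s" for s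
    have nD: "norm (normal_darboux V U kg kn s) = k s" if "s \<in> I" for s
    proof -
      have "normal_darboux V U kg kn s \<bullet> normal_darboux V U kg kn s = kg s^2 + kn s^2"
        using VV[OF that] UU[OF that] UV[OF that] VU[OF that]
        by (simp add: normal_darboux_def inner_add_left inner_add_right inner_diff_left inner_diff_right power2_eq_square)
      then show ?thesis by (simp add: norm_eq_sqrt_inner k_def)
    qed
    have uF: "u s \<bullet> d = F d s" if "s \<in> I" for s d
      using nD[OF that] by (simp add: u_def F_def normal_darboux_def inner_add_left inner_diff_left divide_simps)
    have nu: "norm (u s) = 1" if "s \<in> I" for s
      using nD[OF that] kpos[OF that] by (simp add: u_def)
    have Fb: "\<bar>F d s\<bar> \<le> 1" if "s \<in> I" "norm d = 1" for s d
      using Cauchy_Schwarz_ineq2[of "u s" d] uF[OF that(1)] nu[OF that(1)] that(2) by simp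
    have slant: "Dn_darboux_slant_helix I V U kg kn \<longleftrightarrow> (\<exists>d \<theta>. norm d = 1 \<and> (\<forall>s\<in>I. F d s = cos \<theta>))"
      unfolding Dn_darboux_slant_helix_def using uF unfolding u_def by auto
    show ?thesis
    proof
      assume "helical_curve I T"
      then obtain d \<theta> where d: "norm d = 1" "\<forall>s\<in>I. T s \<bullet> d = cos \<theta>"
        unfolding helical_curve_def by auto
      have G0: "G d s = 0" if "s \<in> I" for s
      proof -
        have "k s * G d s = 0" by (rule local_zero_deriv[OF I(2) that d(2) dA[OF that]])
        then show ?thesis using kpos[OF that] by simp
      qed
      have "\<exists>c. \<forall>x\<in>I. F d x = c"
      proof (rule zero_deriv_const[OF I(1)])
        fix s assume s: "s \<in> I"
        show "(F d has_real_derivative 0) (at s)" using dF[OF s, of d] G0[OF s] by simp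
      qed
      then obtain c where c: "\<forall>x\<in>I. F d x = c" by blast
      have "\<bar>c\<bar> \<le> 1" using Fb[OF s0 d(1)] c s0 by auto
      then have "cos (arccos c) = c" by simp
      then show "Dn_darboux_slant_helix I V U kg kn" unfolding slant using d(1) c by metis
    next
      assume "Dn_darboux_slant_helix I V U kg kn"
      then obtain d \<theta> where d: "norm d = 1" "\<forall>s\<in>I. F d s = cos \<theta>" unfolding slant by auto
      have sgG: "sg s * G d s = 0" if "s \<in> I" for s
      proof -
        have "- sg s * G d s = 0" by (rule local_zero_deriv[OF I(2) that d(2) dF[OF that]])
        then show ?thesis by simp
      qed
      show "helical_curve I T"
      proof (cases "\<forall>s\<in>I. sg s = 0")
        case True
        have Fc: "\<exists>c. \<forall>x\<in>I. F e x = c" for e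
        proof (rule zero_deriv_const[OF I(1)])
          fix s assume s: "s \<in> I"
          show "(F e has_real_derivative 0) (at s)" using dF[OF s, of e] True s by simp
        qed
        have uc: "u s = u s0" if "s \<in> I" for s
        proof (subst vec_eq_iff, rule allI)
          fix i :: 3
          obtain c where c: "\<forall>x\<in>I. F (axis i 1) x = c" using Fc by blast
          have "u s $ i = u s \<bullet> axis i 1" by (simp add: inner_axis)
          also have "\<dots> = u s0 \<bullet> axis i 1" using uF[OF that] uF[OF s0] c that s0 by simp
          also have "\<dots> = u s0 $ i" by (simp add: inner_axis)
          finally show "u s $ i = u s0 $ i" .
        qed
        have "T s \<bullet> u s0 = cos (pi / 2)" if "s \<in> I" for s
        proof -
          have "T s \<bullet> u s = 0" using TV[OF that] TU[OF that]
            by (simp add: u_def normal_darboux_def inner_add_right inner_diff_right)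
          then show ?thesis using uc[OF that] by simp
        qed
        then show ?thesis unfolding helical_curve_def using nu[OF s0] by blast
      next
        case False
        then obtain s1 where s1: "s1 \<in> I" "sg s1 \<noteq> 0" by blast
        define M where "M s = (T s \<bullet> d)^2 + (G d s)^2" for s
        have "\<exists>c. \<forall>x\<in>I. M x = c"
        proof (rule zero_deriv_const[OF I(1)])
          fix s assume s: "s \<in> I"
          have "(M has_real_derivative (of_nat 2 * (k s * G d s * (T s \<bullet> d) ^ (2 - Suc 0)))
             + of_nat 2 * ((- k s * (T s \<bullet> d) + sg s * F d s) * G d s ^ (2 - Suc 0))) (at s)"
            unfolding M_def by (rule DERIV_add[OF DERIV_power[OF dA[OF s]] DERIV_power[OF dG[OF s]]])
          moreover have "of_nat 2 * (k s * G d s * (T s \<bullet> d) ^ (2 - Suc 0))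
             + of_nat 2 * ((- k s * (T s \<bullet> d) + sg s * F d s) * G d s ^ (2 - Suc 0)) = 2 * (sg s * G d s) * F d s"
            by (simp add: algebra_simps)
          ultimately show "(M has_real_derivative 0) (at s)" using sgG[OF s] by simp
        qed
        then obtain M0 where M0: "\<forall>x\<in>I. M x = M0" by blast
        have Gz: "\<forall>s\<in>I. G d s = 0"
        proof (cases "M0 = 0")
          case True
          then show ?thesis using M0 unfolding M_def by (simp add: sum_power2_eq_zero_iff)
        next
          case M0nz: False
          define \<psi> where "\<psi> s = (sg s * cos \<theta>)^2 / (k s)^2 - M0" for s
          have psi0: "\<psi> s = 0" if s: "s \<in> I" "sg s \<noteq> 0" for s
          proof -
            define Op where "Op = sg -` (- {0}) \<inter> I"
            have "open Op" unfolding Op_def using continuous_on_open_vimage[OF I(2)] sgc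
              by (metis open_Compl closed_singleton)
            have sO: "s \<in> Op" using s by (simp add: Op_def)
            have "\<forall>y\<in>Op. G d y = 0" using sgG by (auto simp: Op_def)
            then have "- k s * (T s \<bullet> d) + sg s * F d s = 0"
              using dG[OF s(1)] by (intro local_zero_deriv[OF \<open>open Op\<close> sO]) auto
            then have Ts: "T s \<bullet> d = sg s * cos \<theta> / k s"
              using d(2) s(1) kpos[OF s(1)] by (simp add: field_simps)
            have "M s = (T s \<bullet> d)^2" unfolding M_def using sgG[OF s(1)] s(2) by simp
            then show ?thesis using M0 s(1) Ts unfolding \<psi>_def by (simp add: power_divide)
          qed
          have psi1: "\<psi> s = - M0" if s: "s \<in> I" "sg s = 0" for s
            unfolding \<psi>_def using s by simp
          have psic: "continuous_on I \<psi>" unfolding \<psi>_def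
            by (intro continuous_intros sgc kc) (use kpos in force)
          have "\<psi> ` I \<subseteq> {0, - M0}" using psi0 psi1 by blast
          then have "finite (\<psi> ` I)" by (rule finite_subset) simp
          then have "\<psi> constant_on I" using continuous_finite_range_constant[OF conI psic] by blast
          then obtain p where p: "\<And>s. s \<in> I \<Longrightarrow> \<psi> s = p" unfolding constant_on_def by blast
          have "p = 0" using p[OF s1(1)] psi0[OF s1] by simp
          then have "sg s \<noteq> 0" if "s \<in> I" for s using p[OF that] psi1[OF that] M0nz by auto
          then show ?thesis using sgG by auto
        qed
        have "\<exists>c. \<forall>x\<in>I. T x \<bullet> d = c"
        proof (rule zero_deriv_const[OF I(1)])
          fix s assume s: "s \<in> I"
          show "((\<lambda>s. T s \<bullet> d) has_real_derivative 0) (at s)" using dA[OF s, of d] Gz s by simp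
        qed
        then obtain c where c: "\<forall>x\<in>I. T x \<bullet> d = c" by blast
        have "\<bar>c\<bar> \<le> 1" using Cauchy_Schwarz_ineq2[of "T s0" d] nT[OF s0] d(1) c s0 by auto
        then have "cos (arccos c) = c" by simp
        then show ?thesis unfolding helical_curve_def using d(1) c by metis
      qed
    qed
  qed
  show ?thesis using part1 part2 by blast
qed

end
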